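(* Let $P=(P_1,\dots,P_n)$ be a probability vector, let $\Delta>0$, and let $\gamma>0$ and $\delta>0$ satisfy $$\sum_{i=1}^n\min(\delta,\gamma P_i)=1\qquad\text{and}\qquad \sum_{i:\ \gamma P_i<\delta}P_i=1-\Delta.$$ Define the probability vector $Q^*$ by $Q^*_i=\min(\delta,\gamma P_i)$. Then every $\lambda>0$ with $\alpha_\lambda(P\Vert Q^* )=1-\Delta$ satisfies $\beta_\lambda(P\Vert Q^* )\ge 1-\Delta$.
   Context: For probability vectors $P,Q$ on $\{1,\dots,n\}$ and $\lambda>0$: $\alpha_\lambda(P\Vert Q)=\sum_i\min(\lambda P_i,Q_i)$ (Precision) and $\beta_\lambda(P\Vert Q)=\sum_i\min(P_i,Q_i/\lambda)$ (Recall). The vector $Q^*$ is the paper's candidate minimizer of the "TruncR" loss $-\sum_i P_i\mathbf 1_{\{Q_i<\delta\}}\log Q_i$ under the quantile constraint $\sum_{i:Q_i<\delta}P_i=1-\Delta$. *)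

theory Defs
  imports Complex_Main
begin

definition prob_vec :: "nat \<Rightarrow> (nat \<Rightarrow> real) \<Rightarrow> bool" where
  "prob_vec n P \<longleftrightarrow> (\<forall>i<n. 0 \<le> P i) \<and> (\<Sum>i<n. P i) = 1"

definition precision :: "nat \<Rightarrow> real \<Rightarrow> (nat \<Rightarrow> real) \<Rightarrow> (nat \<Rightarrow> real) \<Rightarrow> real" where
  "precision n lam P Q = (\<Sum>i<n. min (lam * P i) (Q i))"

definition recall :: "nat \<Rightarrow> real \<Rightarrow> (nat \<Rightarrow> real) \<Rightarrow> (nat \<Rightarrow> real) \<Rightarrow> real" where
  "recall n lam P Q = (\<Sum>i<n. min (P i) (Q i / lam))"

end

theory Submission
  imports Defs
begin

theorem propositionB3:
  fixes n :: nat and P :: "nat \<Rightarrow> real" and \<Delta> \<gamma> \<delta> lam :: real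
  assumes "prob_vec n P"
    and "\<Delta> > 0" and "\<gamma> > 0" and "\<delta> > 0"
    and "(\<Sum>i<n. min \<delta> (\<gamma> * P i)) = 1"
    and "(\<Sum>i\<in>{i. i < n \<and> \<gamma> * P i < \<delta>}. P i) = 1 - \<Delta>"
    and "lam > 0"
    and "precision n lam P (\<lambda>i. min \<delta> (\<gamma> * P i)) = 1 - \<Delta>"
  shows "recall n lam P (\<lambda>i. min \<delta> (\<gamma> * P i)) \<ge> 1 - \<Delta>"
proof -
  define Q where "Q = (\<lambda>i. min \<delta> (\<gamma> * P i))"
  have P0: "\<And>i. i < n \<Longrightarrow> 0 \<le> P i" using assms(1) unfolding prob_vec_def by auto
  have Q0: "\<And>i. i < n \<Longrightarrow> 0 \<le> Q i" using P0 assms(3,4) unfolding Q_def by auto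
  have rec: "recall n lam P Q = precision n lam P Q / lam"
    unfolding recall_def precision_def sum_divide_distrib
  proof (rule sum.cong[OF refl])
    fix i show "min (P i) (Q i / lam) = min (lam * P i) (Q i) / lam"
      using assms(7) by (simp add: min_def field_simps)
  qed
  have pr: "precision n lam P Q = 1 - \<Delta>" using assms(8) unfolding Q_def .
  show ?thesis
  proof (cases "\<Delta> \<ge> 1")
    case True
    have "recall n lam P Q \<ge> 0" unfolding recall_def
      using P0 Q0 assms(7) by (intro sum_nonneg) auto
    then show ?thesis using True unfolding Q_def by simp
  next
    case False
    have lam1: "lam \<le> 1"
    proof (rule ccontr)
      assume lg: "\<not> lam \<le> 1"
      show False
      proof (cases "\<gamma> \<le> 1")
        case True
        have "precision n lam P Q = (\<Sum>i<n. Q i)" unfolding precision_def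
        proof (rule sum.cong[OF refl])
          fix i assume i: "i \<in> {..<n}"
          show "min (lam * P i) (Q i) = Q i"
          proof (cases "\<gamma> * P i < \<delta>")
            case True
            then have "Q i = \<gamma> * P i" unfolding Q_def by simp
            moreover have "\<gamma> * P i \<le> lam * P i" using P0[of i] i lg \<open>\<gamma> \<le> 1\<close>
              by (intro mult_right_mono) auto
            ultimately show ?thesis by simp
          next
            case False
            then have "Q i = \<delta>" unfolding Q_def by simp
            moreover have "\<gamma> * P i \<le> lam * P i" using P0[of i] i lg \<open>\<gamma> \<le> 1\<close>
              by (intro mult_right_mono) auto
            ultimately show ?thesis using False by simp
          qed
        qed
        then show False using pr assms(5,2) unfolding Q_def by simp
      next
        case False
        let ?A = "{i. i < n \<and> \<gamma> * P i < \<delta>}"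
        have "(\<Sum>i\<in>?A. min lam \<gamma> * P i) \<le> (\<Sum>i<n. min (lam * P i) (Q i))"
        proof -
          have "(\<Sum>i\<in>?A. min lam \<gamma> * P i) = (\<Sum>i\<in>?A. min (lam * P i) (Q i))"
          proof (rule sum.cong[OF refl])
            fix i assume "i \<in> ?A"
            then have "Q i = \<gamma> * P i" "0 \<le> P i" using P0 unfolding Q_def by auto
            then show "min lam \<gamma> * P i = min (lam * P i) (Q i)"
            proof (cases "lam \<le> \<gamma>")
              case True
              then show ?thesis using \<open>Q i = \<gamma> * P i\<close> \<open>0 \<le> P i\<close>
                by (simp add: min_def mult_right_mono)
            next
              case False
              then have "\<gamma> * P i \<le> lam * P i" using \<open>0 \<le> P i\<close>
                by (intro mult_right_mono) auto
              then show ?thesis using False \<open>Q i = \<gamma> * P i\<close> by (simp add: min_def)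
            qed
          qed
          also have "\<dots> \<le> (\<Sum>i<n. min (lam * P i) (Q i))"
            using P0 Q0 assms(7) by (intro sum_mono2) auto
          finally show ?thesis .
        qed
        moreover have "(\<Sum>i\<in>?A. min lam \<gamma> * P i) = min lam \<gamma> * (1 - \<Delta>)"
          using assms(6) by (simp add: sum_distrib_left[symmetric])
        moreover have "min lam \<gamma> * (1 - \<Delta>) > 1 - \<Delta>"
          using lg False \<open>\<not> \<Delta> \<ge> 1\<close> by simp
        ultimately show False using pr unfolding precision_def by linarith
      qed
    qed
    have "1 - \<Delta> \<le> (1 - \<Delta>) / lam" using lam1 assms(7) False
      by (simp add: le_divide_eq)
    then show ?thesis using rec pr unfolding Q_def by simp
  qed
qed

end
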